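(* Let $k\ge 2$ and let $p\ge 2$ be an integer dividing $k$. If a finite simple graph $G$ admits a closed neighborhood balanced $k$-coloring, then $G$ also admits a closed neighborhood balanced $p$-coloring.
   Context: $N[v]=\{v\}\cup\{u : uv\in E(G)\}$. For an integer $m\ge 2$, a closed neighborhood balanced $m$-coloring of $G$ is a map $c: V(G)\to\{1,\dots,m\}$ such that for every vertex $v$ the numbers $|\{u\in N[v] : c(u)=i\}|$, $i=1,\dots,m$, are all equal. *)

theory Defs
  imports Main
begin

definition simple_graph :: "'a set \<Rightarrow> ('a \<Rightarrow> 'a \<Rightarrow> bool) \<Rightarrow> bool" where
  "simple_graph V E \<longleftrightarrow> finite V \<and> (\<forall>u v. E u v \<longrightarrow> u \<in> V \<and> v \<in> V)
     \<and> (\<forall>u v. E u v \<longrightarrow> E v u) \<and> (\<forall>v. \<not> E v v)"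

definition closed_nbhd :: "'a set \<Rightarrow> ('a \<Rightarrow> 'a \<Rightarrow> bool) \<Rightarrow> 'a \<Rightarrow> 'a set" where
  "closed_nbhd V E v = {v} \<union> {u \<in> V. E u v}"

definition cnb_coloring :: "'a set \<Rightarrow> ('a \<Rightarrow> 'a \<Rightarrow> bool) \<Rightarrow> nat \<Rightarrow> ('a \<Rightarrow> nat) \<Rightarrow> bool" where
  "cnb_coloring V E m c \<longleftrightarrow> (\<forall>v\<in>V. c v \<in> {1..m}) \<and>
     (\<forall>v\<in>V. \<forall>i\<in>{1..m}. \<forall>j\<in>{1..m}.
        card {u \<in> closed_nbhd V E v. c u = i} = card {u \<in> closed_nbhd V E v. c u = j})"

end

theory Submission
  imports Defs
begin

lemma Ij_eq:
  fixes p q j :: nat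
  assumes "p \<ge> 1" "j \<in> {1..p}"
  shows "{i \<in> {1..p*q}. (i - 1) mod p + 1 = j} = (\<lambda>t. j + p*t) ` {..<q}"
proof (intro set_eqI iffI)
  fix i assume "i \<in> {i \<in> {1..p*q}. (i - 1) mod p + 1 = j}"
  hence i: "1 \<le> i" "i \<le> p*q" "(i - 1) mod p + 1 = j" by auto
  have e: "i - 1 = (i - 1) mod p + p * ((i - 1) div p)" by simp
  have "i = j + p * ((i - 1) div p)" using i e by linarith
  moreover have "(i - 1) div p < q"
  proof -
    have "i - 1 < q * p" using i assms by (simp add: mult.commute)
    thus ?thesis using assms by (simp add: div_less_iff_less_mult)
  qed
  ultimately show "i \<in> (\<lambda>t. j + p*t) ` {..<q}" by auto
next
  fix i assume "i \<in> (\<lambda>t. j + p*t) ` {..<q}"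
  then obtain t where t: "t < q" "i = j + p*t" by auto
  have "Suc t \<le> q" using t by simp
  hence "p * Suc t \<le> p * q" by (rule mult_le_mono2)
  hence le: "i \<le> p*q" using t assms by auto
  have "(i - 1) = (j - 1) + p*t" using t assms by auto
  hence "(i - 1) mod p = ((j - 1) + p*t) mod p" by simp
  also have "\<dots> = (j - 1) mod p" by (metis mod_mult_self2 mult.commute)
  also have "\<dots> = j - 1" using assms by (intro mod_less) auto
  finally have m: "(i - 1) mod p = j - 1" .
  have "1 \<le> i" using t(2) assms(2) by simp
  moreover have "(i - 1) mod p + 1 = j" using m assms(2) by simp
  ultimately show "i \<in> {i \<in> {1..p*q}. (i - 1) mod p + 1 = j}" using le by simp
qed

lemma card_Ij:
  fixes p q j :: nat
  assumes "p \<ge> 1" "j \<in> {1..p}"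
  shows "card {i \<in> {1..p*q}. (i - 1) mod p + 1 = j} = q"
  unfolding Ij_eq[OF assms]
  by (subst card_image) (use assms in \<open>auto simp: inj_on_def\<close>)

theorem lemma2p4:
  fixes V :: "'a set" and E :: "'a \<Rightarrow> 'a \<Rightarrow> bool" and k p :: nat
  assumes "simple_graph V E"
    and "k \<ge> 2" and "p \<ge> 2" and "p dvd k"
    and "\<exists>c. cnb_coloring V E k c"
  shows "\<exists>c. cnb_coloring V E p c"
proof -
  obtain c where c: "cnb_coloring V E k c" using assms by blast
  obtain q where k: "k = p*q" using assms(4) by blast
  have fin: "finite V" using assms(1) by (simp add: simple_graph_def)
  define c' where "c' = (\<lambda>v. (c v - 1) mod p + 1)"
  have cnt: "card {u \<in> closed_nbhd V E v. c' u = j} = q * card {u \<in> closed_nbhd V E v. c u = 1}"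
    if v: "v \<in> V" and j: "j \<in> {1..p}" for v j
  proof -
    let ?N = "closed_nbhd V E v"
    let ?I = "{i \<in> {1..k}. (i - 1) mod p + 1 = j}"
    have NV: "?N \<subseteq> V" using v by (auto simp: closed_nbhd_def)
    hence finN: "finite ?N" using fin finite_subset by blast
    have eq: "\<And>i. i \<in> {1..k} \<Longrightarrow> card {u \<in> ?N. c u = i} = card {u \<in> ?N. c u = 1}"
    proof -
      fix i assume "i \<in> {1..k}"
      moreover have "(1::nat) \<in> {1..k}" using assms(2) by simp
      ultimately show "card {u \<in> ?N. c u = i} = card {u \<in> ?N. c u = 1}"
        using c v unfolding cnb_coloring_def by blast
    qed
    have "{u \<in> ?N. c' u = j} = (\<Union>i\<in>?I. {u \<in> ?N. c u = i})"
    proof (intro set_eqI iffI)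
      fix u assume u: "u \<in> {u \<in> ?N. c' u = j}"
      hence "c u \<in> {1..k}" using NV c unfolding cnb_coloring_def by blast
      hence "c u \<in> ?I" using u unfolding c'_def by simp
      thus "u \<in> (\<Union>i\<in>?I. {u \<in> ?N. c u = i})" using u by blast
    next
      fix u assume "u \<in> (\<Union>i\<in>?I. {u \<in> ?N. c u = i})"
      then obtain i where "i \<in> ?I" "u \<in> ?N" "c u = i" by blast
      thus "u \<in> {u \<in> ?N. c' u = j}" unfolding c'_def by simp
    qed
    have "card {u \<in> ?N. c' u = j} = (\<Sum>i\<in>?I. card {u \<in> ?N. c u = i})"
    proof -
      have "card (\<Union>i\<in>?I. {u \<in> ?N. c u = i}) = (\<Sum>i\<in>?I. card {u \<in> ?N. c u = i})"
        by (rule card_UN_disjoint) (use finN in auto)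
      thus ?thesis using \<open>{u \<in> ?N. c' u = j} = _\<close> by simp
    qed
    also have "\<dots> = (\<Sum>i\<in>?I. card {u \<in> ?N. c u = 1})"
      by (intro sum.cong refl) (use eq in blast)
    also have "\<dots> = q * card {u \<in> ?N. c u = 1}"
    proof -
      have cI: "card ?I = q" using card_Ij[of p j q] assms(3) j k by simp
      show ?thesis unfolding sum_constant by (simp only: cI of_nat_id)
    qed
    finally show ?thesis .
  qed
  have "cnb_coloring V E p c'"
    unfolding cnb_coloring_def
  proof (intro conjI ballI)
    fix v assume "v \<in> V" show "c' v \<in> {1..p}" using assms(3) unfolding c'_def by (simp add: Suc_leI)
  next
    fix v i j assume "v \<in> V" "i \<in> {1..p}" "j \<in> {1..p}"
    thus "card {u \<in> closed_nbhd V E v. c' u = i} = card {u \<in> closed_nbhd V E v. c' u = j}"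
      using cnt by simp
  qed
  thus ?thesis by blast
qed

end
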